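(* Let $f\in R(A_2)$, $g\in R(A_1^* )$, $k\in K_2$, let $x\in D_2=D(A_2)\cap D(A_1^* )$ be the unique solution of $A_2x=f$, $A_1^*x=g$, $\pi_2x=k$, let $\tilde x\in H_2$, and set $e:=x-\tilde x$, $e_{A_1}:=\pi_{A_1}e$, $e_{A_2^*}:=\pi_{A_2^*}e$, $e_{K_2}:=\pi_2e$. Then: (i) $e=e_{A_1}+e_{K_2}+e_{A_2^*}\in R(A_1)\oplus K_2\oplus R(A_2^* )$ and $\|e\|^2_{H_2}=\|e_{A_1}\|^2_{H_2}+\|e_{K_2}\|^2_{H_2}+\|e_{A_2^*}\|^2_{H_2}$; (ii) $\|e_{A_1}\|^2_{H_2}=\max_{\varphi\in D(A_1)}\big(2\langle g,\varphi\rangle_{H_1}-\langle2\tilde x+A_1\varphi,A_1\varphi\rangle_{H_2}\big)$, the maximum being attained e.g. at $\hat\varphi:=(\mathcal{A}_1)^{-1}e_{A_1}\in D(\mathcal{A}_1)$; (iii) $\|e_{A_2^*}\|^2_{H_2}=\max_{\phi\in D(A_2^* )}\big(2\langle f,\phi\rangle_{H_3}-\langle2\tilde x+A_2^*\phi,A_2^*\phi\rangle_{H_2}\big)$, the maximum being attained e.g. at $\hat\phi:=(\mathcal{A}_2^* )^{-1}e_{A_2^*}\in D(\mathcal{A}_2^* )$; (iv) $\|e_{K_2}\|^2_{H_2}=\max_{\theta\in K_2}\langle2(k-\tilde x)-\theta,\theta\rangle_{H_2}$, the maximum being attained at $\hat\theta:=e_{K_2}$. If $\tilde x=k+\tilde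 x_\perp$ with some $\tilde x_\perp\in K_2^\perp$, then $e_{K_2}=0$, and in (ii) and (iii) $\tilde x$ can be replaced by $\tilde x_\perp$.
   Context: Let $H_0,\dots,H_4$ be Hilbert spaces and, for $\ell=0,\dots,3$, $A_\ell:D(A_\ell)\subset H_\ell\to H_{\ell+1}$ densely defined closed linear operators with Hilbert space adjoints $A_\ell^*$, satisfying $R(A_\ell)\subset N(A_{\ell+1})$ for $\ell=0,1,2$. Standing assumption: $R(A_1)$ and $R(A_2)$ are closed and $K_2$ is finite dimensional. $K_2:=N(A_2)\cap N(A_1^* )$, $\pi_2:H_2\to K_2$ orthogonal projector; $\pi_{A_1}$, $\pi_{A_2^*}$ orthogonal projectors of $H_2$ onto $R(A_1)$, $R(A_2^* )$. Reduced operators $\mathcal{A}_1:=A_1|_{D(A_1)\cap R(A_1^* )}$ and $\mathcal{A}_2^*:=A_2^*|_{D(A_2^* )\cap R(A_2)}$ (injective, with ranges $R(A_1)$ and $R(A_2^* )$). *)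

theory Defs
  imports "HOL-Analysis.Analysis"
begin

text \<open>Real Hilbert spaces are types of class real_inner + complete_space.
An (unbounded) linear operator A : D(A) \<subseteq> H \<rightarrow> H' is represented by a pair
(D, A) of its domain D and a function A (values outside D irrelevant).\<close>

definition lin_op :: "'a::real_vector set \<Rightarrow> ('a \<Rightarrow> 'b::real_vector) \<Rightarrow> bool" where
  "lin_op D A \<longleftrightarrow> subspace D \<and>
     (\<forall>x\<in>D. \<forall>y\<in>D. A (x + y) = A x + A y) \<and> (\<forall>c. \<forall>x\<in>D. A (c *\<^sub>R x) = c *\<^sub>R A x)"

definition densely_defined :: "'a::real_normed_vector set \<Rightarrow> bool" where
  "densely_defined D \<longleftrightarrow> closure D = UNIV"

definition closed_op :: "'a::topological_space set \<Rightarrow> ('a \<Rightarrow> 'b::topological_space) \<Rightarrow> bool" where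
  "closed_op D A \<longleftrightarrow> closed {(x, A x) | x. x \<in> D}"

definition dd_closed_op :: "'a::real_normed_vector set \<Rightarrow> ('a \<Rightarrow> 'b::real_normed_vector) \<Rightarrow> bool" where
  "dd_closed_op D A \<longleftrightarrow> lin_op D A \<and> densely_defined D \<and> closed_op D A"

definition adj_dom :: "'a::real_inner set \<Rightarrow> ('a \<Rightarrow> 'b::real_inner) \<Rightarrow> 'b set" where
  "adj_dom D A = {y. \<exists>z. \<forall>x\<in>D. inner (A x) y = inner x z}"

definition adj :: "'a::real_inner set \<Rightarrow> ('a \<Rightarrow> 'b::real_inner) \<Rightarrow> 'b \<Rightarrow> 'a" where
  "adj D A y = (THE z. \<forall>x\<in>D. inner (A x) y = inner x z)"

definition ran :: "'a set \<Rightarrow> ('a \<Rightarrow> 'b) \<Rightarrow> 'b set" where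
  "ran D A = A ` D"

definition ker :: "'a set \<Rightarrow> ('a \<Rightarrow> 'b::zero) \<Rightarrow> 'a set" where
  "ker D A = {x \<in> D. A x = 0}"

definition orth_proj :: "'a::real_inner set \<Rightarrow> 'a \<Rightarrow> 'a" where
  "orth_proj S x = (THE y. y \<in> S \<and> (\<forall>s\<in>S. inner (x - y) s = 0))"

definition orth_compl :: "'a::real_inner set \<Rightarrow> 'a set" where
  "orth_compl S = {x. \<forall>s\<in>S. inner x s = 0}"

definition fin_dim :: "'a::real_vector set \<Rightarrow> bool" where
  "fin_dim S \<longleftrightarrow> (\<exists>B. finite B \<and> S = span B)"

text \<open>Inverse of the reduced operator A|_{D \<inter> S} (S = R(A^*)).\<close>
definition red_inv :: "'a set \<Rightarrow> ('a \<Rightarrow> 'b) \<Rightarrow> 'a set \<Rightarrow> 'b \<Rightarrow> 'a" where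
  "red_inv D A S y = (THE u. u \<in> D \<inter> S \<and> A u = y)"

end

theory Submission
  imports Defs
begin

lemma lin_op_zero: assumes "lin_op D A" shows "0 \<in> D" "A 0 = 0"
proof -
  have s: "subspace D" using assms by (simp add: lin_op_def)
  then show "0 \<in> D" by (simp add: subspace_0)
  have "\<forall>c. \<forall>x\<in>D. A (c *\<^sub>R x) = c *\<^sub>R A x" using assms by (simp add: lin_op_def)
  from this[rule_format, of 0 0] \<open>0 \<in> D\<close> show "A 0 = 0" by simp
qed

lemma lin_op_add: "lin_op D A \<Longrightarrow> x \<in> D \<Longrightarrow> y \<in> D \<Longrightarrow> x + y \<in> D \<and> A (x + y) = A x + A y"
  by (simp add: lin_op_def subspace_add)

lemma lin_op_scale: "lin_op D A \<Longrightarrow> x \<in> D \<Longrightarrow> c *\<^sub>R x \<in> D \<and> A (c *\<^sub>R x) = c *\<^sub>R A x"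
  by (simp add: lin_op_def subspace_scale)

lemma lin_op_diff: assumes "lin_op D A" "x \<in> D" "y \<in> D" shows "x - y \<in> D \<and> A (x - y) = A x - A y"
proof -
  have "(-1) *\<^sub>R y \<in> D \<and> A ((-1) *\<^sub>R y) = (-1) *\<^sub>R A y" using lin_op_scale assms by blast
  then show ?thesis using lin_op_add[OF assms(1,2), of "(-1) *\<^sub>R y"] by simp
qed

lemma subspace_ran: assumes "lin_op D A" shows "subspace (ran D A)"
  unfolding subspace_def ran_def
proof (intro conjI ballI allI)
  show "0 \<in> A ` D" using lin_op_zero[OF assms] by force
  fix x y assume "x \<in> A ` D" "y \<in> A ` D"
  then obtain a b where "a \<in> D" "b \<in> D" "x = A a" "y = A b" by blast
  then show "x + y \<in> A ` D" using lin_op_add[OF assms, of a b] by (metis image_eqI)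
next
  fix c x assume "x \<in> A ` D"
  then obtain a where "a \<in> D" "x = A a" by blast
  then show "c *\<^sub>R x \<in> A ` D" using lin_op_scale[OF assms, of a c] by (metis image_eqI)
qed

lemma subspace_ker: assumes "lin_op D A" shows "subspace (ker D A)"
  unfolding subspace_def ker_def
  using lin_op_zero[OF assms] lin_op_add[OF assms] lin_op_scale[OF assms] by auto

lemma graph_limit:
  fixes D :: "'a::real_normed_vector set" and A :: "'a \<Rightarrow> 'b::real_normed_vector"
  assumes "closed_op D A" "\<And>n. X n \<in> D" "X \<longlonglongrightarrow> x" "(\<lambda>n. A (X n)) \<longlonglongrightarrow> y"
  shows "x \<in> D \<and> A x = y"
proof -
  have c: "closed {(x, A x) | x. x \<in> D}" using assms(1) by (simp add: closed_op_def)
  have t: "(\<lambda>n. (X n, A (X n))) \<longlonglongrightarrow> (x, y)" using assms(3,4) by (rule tendsto_Pair)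
  have m: "\<forall>n. (X n, A (X n)) \<in> {(x, A x) | x. x \<in> D}" using assms(2) by blast
  have "(x, y) \<in> {(x, A x) | x. x \<in> D}"
    using c[unfolded closed_sequential_limits, rule_format, of "\<lambda>n. (X n, A (X n))" "(x, y)"] t m by blast
  then show ?thesis by auto
qed

lemma closed_ker: fixes D :: "'a::real_normed_vector set" and A :: "'a \<Rightarrow> 'b::real_normed_vector"
  assumes "closed_op D A" shows "closed (ker D A)"
  unfolding closed_sequential_limits
proof (intro allI impI)
  fix X l assume h: "(\<forall>n. X n \<in> ker D A) \<and> X \<longlonglongrightarrow> l"
  have "\<And>n. X n \<in> D" "\<And>n. A (X n) = 0" using h by (auto simp: ker_def)
  then have "l \<in> D \<and> A l = 0"
    using graph_limit[OF assms, of X l 0] h by simp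
  then show "l \<in> ker D A" by (simp add: ker_def)
qed

lemma orth_proj_unique:
  assumes "p \<in> S" "\<forall>s\<in>S. inner (x - p) s = 0" shows "orth_proj S x = p"
  unfolding orth_proj_def
proof (rule the_equality)
  show "p \<in> S \<and> (\<forall>s\<in>S. inner (x - p) s = 0)" using assms by blast
  fix q assume q: "q \<in> S \<and> (\<forall>s\<in>S. inner (x - q) s = 0)"
  have "inner (x - p) p = 0" "inner (x - p) q = 0" "inner (x - q) p = 0" "inner (x - q) q = 0"
    using assms q by auto
  then have "inner (q - p) (q - p) = 0" by (simp add: inner_diff algebra_simps)
  then show "q = p" by simp
qed

lemma orth_compl_closed: "closed (orth_compl S)"
  unfolding closed_sequential_limits orth_compl_def
proof (intro allI impI, simp, intro ballI)
  fix X l s assume h: "(\<forall>n. \<forall>s\<in>S. inner (X n) s = 0) \<and> X \<longlonglongrightarrow> l" and s: "s \<in> S"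
  have "(\<lambda>n. inner (X n) s) \<longlonglongrightarrow> inner l s" using h by (intro tendsto_intros) auto
  moreover have "(\<lambda>n. inner (X n) s) = (\<lambda>n. 0)" using h s by auto
  ultimately show "inner l s = 0" using LIMSEQ_unique by (metis tendsto_const)
qed

lemma orth_compl_subspace: "subspace (orth_compl S)"
  unfolding subspace_def orth_compl_def by (auto simp: inner_add_left)

lemma dense_orth:
  assumes "densely_defined D" "\<forall>x\<in>D. inner x z = 0" shows "z = 0"
proof -
  have "D \<subseteq> {x. inner z x = 0}" using assms(2) by (auto simp: inner_commute)
  then have "closure D \<subseteq> {x. inner z x = 0}" by (intro closure_minimal) (auto intro: closed_hyperplane)
  then have "inner z z = 0" using assms(1) unfolding densely_defined_def by blast
  then show ?thesis by simp
qed

lemma adj_char: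
  assumes "densely_defined D" "\<forall>x\<in>D. inner (A x) w = inner x z"
  shows "w \<in> adj_dom D A \<and> adj D A w = z"
proof
  show "w \<in> adj_dom D A" using assms(2) by (auto simp: adj_dom_def)
  show "adj D A w = z" unfolding adj_def
  proof (rule the_equality)
    show "\<forall>x\<in>D. inner (A x) w = inner x z" by fact
    fix z' assume "\<forall>x\<in>D. inner (A x) w = inner x z'"
    then have "\<forall>x\<in>D. inner x (z' - z) = 0" using assms(2) by (simp add: inner_diff_right)
    then show "z' = z" using dense_orth[OF assms(1), of "z' - z"] by simp
  qed
qed

lemma adj_prop:
  assumes "densely_defined D" "w \<in> adj_dom D A" "x \<in> D"
  shows "inner (A x) w = inner x (adj D A w)"
proof -
  obtain z where z: "\<forall>x\<in>D. inner (A x) w = inner x z" using assms(2) by (auto simp: adj_dom_def)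
  then have "adj D A w = z" using adj_char[OF assms(1) z] by blast
  then show ?thesis using z assms(3) by simp
qed

lemma parallelogram_aux:
  fixes x a b :: "'a::real_inner"
  shows "(norm (a - b))\<^sup>2 = 2 * (norm (x - a))\<^sup>2 + 2 * (norm (x - b))\<^sup>2 - 4 * (norm (x - (1/2) *\<^sub>R (a + b)))\<^sup>2"
  by (simp add: power2_norm_eq_inner inner_diff_left inner_diff_right inner_add_left inner_add_right
       inner_commute algebra_simps)

lemma sq_aux: fixes u t :: "'a::real_inner"
  shows "(norm (u - a *\<^sub>R t))\<^sup>2 = (norm u)\<^sup>2 - 2 * a * inner u t + a\<^sup>2 * (norm t)\<^sup>2"
  unfolding power2_norm_eq_inner by (simp add: inner_diff_left inner_diff_right inner_commute power2_eq_square)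

lemma infdist_near:
  assumes "S \<noteq> {}" "infdist x S < r" shows "\<exists>s\<in>S. dist x s < r"
  using assms by (simp add: infdist_notempty cINF_less_iff)

lemma proj_exists:
  fixes S :: "'a::{real_inner,complete_space} set"
  assumes "subspace S" "closed S"
  shows "\<exists>p\<in>S. \<forall>s\<in>S. inner (x - p) s = 0"
proof -
  have S0: "0 \<in> S" using assms(1) subspace_0 by blast
  define d where "d = infdist x S"
  have d0: "0 \<le> d" by (simp add: d_def infdist_nonneg)
  have dle: "d \<le> norm (x - y)" if "y \<in> S" for y
    using infdist_le[OF that, of x] by (simp add: d_def dist_norm)
  have near: "\<exists>s\<in>S. (norm (x - s))\<^sup>2 < d\<^sup>2 + e" if "e > 0" for e
  proof -
    have "d < sqrt (d\<^sup>2 + e)" using that by (intro real_less_rsqrt) simp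
    then obtain s where s: "s \<in> S" "dist x s < sqrt (d\<^sup>2 + e)"
      using infdist_near[of S x] S0 by (auto simp: d_def)
    then have "(norm (x - s))\<^sup>2 < (sqrt (d\<^sup>2 + e))\<^sup>2"
      by (intro power_strict_mono) (auto simp: dist_norm)
    then show ?thesis using s d0 that by auto
  qed
  have "\<forall>n. \<exists>s\<in>S. (norm (x - s))\<^sup>2 < d\<^sup>2 + 1 / real (Suc n)"
    using near by simp
  then obtain s where s: "\<And>n. s n \<in> S" "\<And>n. (norm (x - s n))\<^sup>2 < d\<^sup>2 + 1 / real (Suc n)"
    by metis
  have par: "(norm (s m - s n))\<^sup>2 \<le> 2 / real (Suc m) + 2 / real (Suc n)" for m n
  proof -
    have "(1/2) *\<^sub>R (s m + s n) \<in> S" using assms(1) s(1) by (simp add: subspace_add subspace_scale)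
    then have "d \<le> norm (x - (1/2) *\<^sub>R (s m + s n))" by (rule dle)
    then have "d\<^sup>2 \<le> (norm (x - (1/2) *\<^sub>R (s m + s n)))\<^sup>2" using d0 by (simp add: power_mono)
    then show ?thesis using parallelogram_aux[of "s m" "s n" x] s(2)[of m] s(2)[of n] by linarith
  qed
  have "Cauchy s"
  proof (rule metric_CauchyI)
    fix e :: real assume e: "e > 0"
    obtain N :: nat where N: "4 / e\<^sup>2 < real N" using reals_Archimedean2 by blast
    have eN: "4 / real (Suc N) < e\<^sup>2"
    proof -
      have "4 < e\<^sup>2 * real N" using N e by (simp add: field_simps)
      also have "\<dots> \<le> e\<^sup>2 * real (Suc N)" using e by simp
      finally show ?thesis by (simp add: field_simps)
    qed
    show "\<exists>M. \<forall>m\<ge>M. \<forall>n\<ge>M. dist (s m) (s n) < e"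
    proof (intro exI allI impI)
      fix m n assume mn: "N \<le> m" "N \<le> n"
      have "2 / real (Suc m) \<le> 2 / real (Suc N)" "2 / real (Suc n) \<le> 2 / real (Suc N)"
        using mn by (auto intro!: divide_left_mono)
      then have "(norm (s m - s n))\<^sup>2 < e\<^sup>2" using par[of m n] eN by linarith
      then show "dist (s m) (s n) < e" using e by (simp add: dist_norm power2_less_imp_less)
    qed
  qed
  then obtain p where p: "s \<longlonglongrightarrow> p" using Cauchy_convergent convergent_def by blast
  have pS: "p \<in> S" using assms(2) closed_sequential_limits p s(1) by blast
  have lim1: "(\<lambda>n. (norm (x - s n))\<^sup>2) \<longlonglongrightarrow> (norm (x - p))\<^sup>2"
    using p by (intro tendsto_intros)
  have lim2: "(\<lambda>n. d\<^sup>2 + 1 / real (Suc n)) \<longlonglongrightarrow> d\<^sup>2 + 0"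
    by (intro tendsto_intros LIMSEQ_inverse_real_of_nat[unfolded inverse_eq_divide])
  have pd: "(norm (x - p))\<^sup>2 \<le> d\<^sup>2"
    using LIMSEQ_le[OF lim1 lim2] s(2) less_imp_le by auto
  show ?thesis
  proof (intro bexI[OF _ pS] ballI)
    fix t assume t: "t \<in> S"
    define c where "c = inner (x - p) t"
    show "inner (x - p) t = 0"
    proof (cases "t = 0")
      case True then show ?thesis by simp
    next
      case False
      define \<tau> where "\<tau> = c / (norm t)\<^sup>2"
      have nt: "(norm t)\<^sup>2 > 0" using False by simp
      have "p + \<tau> *\<^sub>R t \<in> S" using assms(1) pS t by (simp add: subspace_add subspace_scale)
      then have "d \<le> norm (x - (p + \<tau> *\<^sub>R t))" by (rule dle)
      then have "d\<^sup>2 \<le> (norm (x - (p + \<tau> *\<^sub>R t)))\<^sup>2" using d0 by (simp add: power_mono)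
      also have "(norm (x - (p + \<tau> *\<^sub>R t)))\<^sup>2 = (norm (x - p))\<^sup>2 - 2 * \<tau> * c + \<tau>\<^sup>2 * (norm t)\<^sup>2"
      proof -
        have eq: "x - (p + \<tau> *\<^sub>R t) = (x - p) - \<tau> *\<^sub>R t" by (simp add: algebra_simps)
        show ?thesis unfolding eq c_def by (rule sq_aux)
      qed
      also have "\<dots> = (norm (x - p))\<^sup>2 - c\<^sup>2 / (norm t)\<^sup>2"
        using nt by (simp add: \<tau>_def field_simps power2_eq_square)
      finally have "c\<^sup>2 / (norm t)\<^sup>2 \<le> 0" using pd by linarith
      then have "c\<^sup>2 \<le> 0" using nt by (simp add: divide_le_0_iff)
      then show ?thesis by (simp add: c_def)
    qed
  qed
qed

lemma orth_proj_props:
  fixes S :: "'a::{real_inner,complete_space} set"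
  assumes "subspace S" "closed S"
  shows "orth_proj S x \<in> S" "\<forall>s\<in>S. inner (x - orth_proj S x) s = 0"
proof -
  obtain p where p: "p \<in> S" "\<forall>s\<in>S. inner (x - p) s = 0" using proj_exists[OF assms] by blast
  then have "orth_proj S x = p" by (rule orth_proj_unique)
  then show "orth_proj S x \<in> S" "\<forall>s\<in>S. inner (x - orth_proj S x) s = 0" using p by auto
qed

lemma baire_step:
  fixes D :: "'a::real_normed_vector set" and A :: "'a \<Rightarrow> 'b::{real_normed_vector,complete_space}"
  assumes lin: "lin_op D A" and R: "closed (ran D A)"
  shows "\<exists>n::nat. \<exists>v0\<in>ran D A. \<exists>r>0. \<forall>v\<in>ran D A. dist v v0 < r \<longrightarrow>
            v \<in> closure (A ` (D \<inter> cball 0 (real n)))"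
proof (rule ccontr)
  assume nc: "\<not> ?thesis"
  define R where "R = ran D A"
  define T where "T n = closure (A ` (D \<inter> cball 0 (real n)))" for n
  have TR: "T n \<subseteq> R" for n
    unfolding T_def R_def using R by (intro closure_minimal) (auto simp: ran_def)
  have cov: "R \<subseteq> \<Union>(range T)"
  proof
    fix v assume "v \<in> R"
    then obtain x where x: "x \<in> D" "v = A x" by (auto simp: R_def ran_def)
    obtain n :: nat where "norm x \<le> real n" using real_arch_simple by blast
    then have "v \<in> A ` (D \<inter> cball 0 (real n))" using x by auto
    then have "v \<in> T n" unfolding T_def by (rule subsetD[OF closure_subset])
    then show "v \<in> \<Union>(range T)" by auto
  qed
  have int0: "(top_of_set R) interior_of (T n) = {}" for n
  proof (rule ccontr)
    assume "(top_of_set R) interior_of (T n) \<noteq> {}"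
    then obtain v0 U where U: "openin (top_of_set R) U" "v0 \<in> U" "U \<subseteq> T n"
      by (auto simp: interior_of_def)
    have op: "U \<subseteq> R \<and> (\<forall>x\<in>U. \<exists>e>0. \<forall>x'\<in>R. dist x' x < e \<longrightarrow> x' \<in> U)"
      using U(1) by (simp add: openin_euclidean_subtopology_iff)
    then have v0R: "v0 \<in> R" using U(2) by blast
    obtain r where r: "r > 0" "\<forall>x'\<in>R. dist x' v0 < r \<longrightarrow> x' \<in> U"
      using op U(2) by blast
    have H: "\<forall>v\<in>R. dist v v0 < r \<longrightarrow> v \<in> T n" using r(2) U(3) by blast
    have "\<exists>v0\<in>ran D A. \<exists>r>0. \<forall>v\<in>ran D A. dist v v0 < r \<longrightarrow> v \<in> closure (A ` (D \<inter> cball 0 (real n)))"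
      using v0R r(1) H unfolding R_def T_def by (intro bexI[of _ v0] exI[of _ r] conjI)
    then show False using nc by blast
  qed
  have clR: "closed R" using R by (simp add: R_def)
  have cms: "completely_metrizable_space (top_of_set R)"
    by (rule completely_metrizable_space_closedin[OF completely_metrizable_space_euclidean])
       (simp add: closed_closedin[symmetric] clR)
  have B: "(top_of_set R) interior_of \<Union>(range T) = {}"
  proof (rule Baire_category_alt)
    show "completely_metrizable_space (top_of_set R) \<or> locally_compact_space (top_of_set R) \<and> regular_space (top_of_set R)"
      using cms by blast
    show "countable (range T)" by simp
    fix S assume "S \<in> range T"
    then obtain n where Sn: "S = T n" by blast
    have "closed (T n)" by (simp add: T_def)
    then show "closedin (top_of_set R) S \<and> (top_of_set R) interior_of S = {}"
      using closed_subset[OF TR[of n]] int0[of n] Sn by simp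
  qed
  have iR: "(top_of_set R) interior_of R = R"
    by (metis interior_of_topspace topspace_euclidean_subtopology)
  have sub: "R \<subseteq> (top_of_set R) interior_of \<Union>(range T)"
    using interior_of_mono[OF cov, of "top_of_set R"] iR by simp
  have z: "0 \<in> R" unfolding R_def ran_def using lin_op_zero[OF lin] by (rule_tac image_eqI) auto
  show False using sub z B by blast
qed

lemma approx_step:
  fixes D :: "'a::real_normed_vector set" and A :: "'a \<Rightarrow> 'b::{real_normed_vector,complete_space}"
  assumes lin: "lin_op D A" and R: "closed (ran D A)"
  shows "\<exists>M0\<ge>0. \<forall>w\<in>ran D A. \<forall>\<epsilon>>0. \<exists>x\<in>D. norm x \<le> M0 * norm w \<and> norm (A x - w) < \<epsilon>"
proof -
  obtain n :: nat and v0 r where v0: "v0 \<in> ran D A" and r: "r > 0"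
    and ball: "\<forall>v\<in>ran D A. dist v v0 < r \<longrightarrow> v \<in> closure (A ` (D \<inter> cball 0 (real n)))"
    using baire_step[OF assms] by blast
  have sub: "subspace (ran D A)" by (rule subspace_ran[OF lin])
  define M0 where "M0 = 4 * real n / r"
  have M0: "M0 \<ge> 0" using r by (simp add: M0_def)
  show ?thesis
  proof (intro exI[of _ M0] conjI M0 ballI allI impI)
    fix w and \<epsilon> :: real assume wR: "w \<in> ran D A" and e: "\<epsilon> > 0"
    show "\<exists>x\<in>D. norm x \<le> M0 * norm w \<and> norm (A x - w) < \<epsilon>"
    proof (cases "w = 0")
      case True
      then show ?thesis using lin_op_zero[OF lin] e by (intro bexI[of _ 0]) auto
    next
      case False
      define c where "c = r / (2 * norm w)"
      have c: "c > 0" using False r by (simp add: c_def)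
      define w' where "w' = c *\<^sub>R w"
      have w'R: "w' \<in> ran D A" using sub wR by (simp add: w'_def subspace_scale)
      have nw': "norm w' = r / 2" using False r by (simp add: w'_def c_def)
      have "v0 + w' \<in> ran D A" using sub v0 w'R by (simp add: subspace_add)
      moreover have "dist (v0 + w') v0 < r" using nw' r by (simp add: dist_norm)
      ultimately have c1: "v0 + w' \<in> closure (A ` (D \<inter> cball 0 (real n)))" using ball by blast
      have c2: "v0 \<in> closure (A ` (D \<inter> cball 0 (real n)))" using ball v0 r by simp
      define \<delta> where "\<delta> = \<epsilon> * c / 2"
      have \<delta>: "\<delta> > 0" using e c by (simp add: \<delta>_def)
      obtain y1 where y1: "y1 \<in> A ` (D \<inter> cball 0 (real n))" "dist y1 (v0 + w') < \<delta>"
        using c1 \<delta> closure_approachable by blast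
      obtain y2 where y2: "y2 \<in> A ` (D \<inter> cball 0 (real n))" "dist y2 v0 < \<delta>"
        using c2 \<delta> closure_approachable by blast
      obtain x1 where x1: "x1 \<in> D" "norm x1 \<le> real n" "y1 = A x1" using y1(1) by auto
      obtain x2 where x2: "x2 \<in> D" "norm x2 \<le> real n" "y2 = A x2" using y2(1) by auto
      define x where "x = (1/c) *\<^sub>R (x1 - x2)"
      have xD: "x \<in> D \<and> A x = (1/c) *\<^sub>R (A x1 - A x2)"
        using lin_op_diff[OF lin x1(1) x2(1)] lin_op_scale[OF lin] by (simp add: x_def)
      have "norm (x1 - x2) \<le> 2 * real n" using x1(2) x2(2) norm_triangle_ineq4[of x1 x2] by linarith
      then have "norm x \<le> (1/c) * (2 * real n)" using c by (simp add: x_def divide_right_mono)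
      also have "\<dots> = M0 * norm w" using False r by (simp add: c_def M0_def field_simps)
      finally have nx: "norm x \<le> M0 * norm w" .
      define a where "a = A x1 - (v0 + w')"
      define b where "b = A x2 - v0"
      have "A x - w = (1/c) *\<^sub>R (a - b)"
        using xD c by (simp add: w'_def a_def b_def algebra_simps)
      then have "norm (A x - w) = (1/c) * norm (a - b)" using c by simp
      also have "\<dots> \<le> (1/c) * (norm a + norm b)"
        using c by (intro mult_left_mono norm_triangle_ineq4) auto
      finally have "norm (A x - w) \<le> (1/c) * (norm (A x1 - (v0 + w')) + norm (A x2 - v0))"
        by (simp add: a_def b_def)
      also have "\<dots> < (1/c) * (\<delta> + \<delta>)"
        using y1(2) y2(2) x1(3) x2(3) c by (intro mult_strict_left_mono) (auto simp: dist_norm)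
      also have "\<dots> = \<epsilon>" using c by (simp add: \<delta>_def)
      finally show ?thesis using xD nx by blast
    qed
  qed
qed

lemma geo_aux:
  fixes a c q :: real assumes "q = 2 ^ k"
  shows "2 * c * (a - 1 / q) + c / q = 2 * c * (a - 1 / 2 ^ Suc k)"
proof -
  have q: "q > 0" "2 ^ Suc k = 2 * q" using assms by simp_all
  show ?thesis unfolding q(2) using q(1) by (simp add: field_simps)
qed

lemma open_mapping:
  fixes D :: "'a::{real_normed_vector,complete_space} set" and A :: "'a \<Rightarrow> 'b::{real_normed_vector,complete_space}"
  assumes lin: "lin_op D A" and cl: "closed_op D A" and R: "closed (ran D A)"
  shows "\<exists>M>0. \<forall>v\<in>ran D A. \<exists>x\<in>D. A x = v \<and> norm x \<le> M * norm v"
proof -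
  obtain M0 where M0: "M0 \<ge> 0"
    and ap: "\<forall>w\<in>ran D A. \<forall>\<epsilon>>0. \<exists>x\<in>D. norm x \<le> M0 * norm w \<and> norm (A x - w) < \<epsilon>"
    using approx_step[OF lin R] by blast
  have sub: "subspace (ran D A)" by (rule subspace_ran[OF lin])
  show ?thesis
  proof (intro exI[of _ "2 * M0 + 1"] conjI ballI)
    show "0 < 2 * M0 + 1" using M0 by simp
    fix v assume vR: "v \<in> ran D A"
    show "\<exists>x\<in>D. A x = v \<and> norm x \<le> (2 * M0 + 1) * norm v"
    proof (cases "v = 0")
      case True
      then show ?thesis using lin_op_zero[OF lin] by (intro bexI[of _ 0]) auto
    next
      case False
      define P where "P k w = (SOME x. x \<in> D \<and> norm x \<le> M0 * norm w \<and> norm (A x - w) < norm v / 2 ^ Suc k)" for k w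
      define s where "s = rec_nat 0 (\<lambda>k sk. sk + P k (v - A sk))"
      have s0: "s 0 = 0" by (simp add: s_def)
      have sS: "s (Suc k) = s k + P k (v - A (s k))" for k by (simp add: s_def)
      have Pprop: "P k w \<in> D \<and> norm (P k w) \<le> M0 * norm w \<and> norm (A (P k w) - w) < norm v / 2 ^ Suc k"
        if "w \<in> ran D A" for k w
      proof -
        have "norm v / 2 ^ Suc k > 0" using False by simp
        then have "\<exists>x. x \<in> D \<and> norm x \<le> M0 * norm w \<and> norm (A x - w) < norm v / 2 ^ Suc k"
          using ap that by blast
        then show ?thesis unfolding P_def by (rule someI_ex)
      qed
      have I: "s k \<in> D \<and> norm (v - A (s k)) \<le> norm v / 2 ^ k" for k
      proof (induction k)
        case 0 then show ?case using lin_op_zero[OF lin] s0 by simp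
      next
        case (Suc k)
        define w where "w = v - A (s k)"
        have "A (s k) \<in> ran D A" using Suc by (simp add: ran_def)
        then have wR: "w \<in> ran D A" using sub vR by (simp add: w_def subspace_diff)
        note p = Pprop[OF wR, of k]
        have sD: "s (Suc k) \<in> D" and As: "A (s (Suc k)) = A (s k) + A (P k w)"
          using lin_op_add[OF lin, of "s k" "P k w"] Suc p by (simp_all add: sS w_def)
        have "v - A (s (Suc k)) = - (A (P k w) - w)" unfolding As w_def by (simp add: algebra_simps)
        then have "norm (v - A (s (Suc k))) = norm (A (P k w) - w)" by (simp only: norm_minus_cancel)
        also have "\<dots> \<le> norm v / 2 ^ Suc k" using p by linarith
        finally show ?case using sD by blast
      qed
      have step: "norm (s (Suc k) - s k) \<le> M0 * norm v / 2 ^ k" for k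
      proof -
        define w where "w = v - A (s k)"
        have "A (s k) \<in> ran D A" using I by (simp add: ran_def)
        then have wR: "w \<in> ran D A" using sub vR by (simp add: w_def subspace_diff)
        have "norm (s (Suc k) - s k) = norm (P k w)" by (simp add: sS w_def)
        also have "\<dots> \<le> M0 * norm w" using Pprop[OF wR] by blast
        also have "\<dots> \<le> M0 * (norm v / 2 ^ k)" using I[of k] M0 unfolding w_def by (intro mult_left_mono) auto
        finally show ?thesis by simp
      qed
      define B where "B = 2 * M0 * norm v"
      have B0: "B \<ge> 0" using M0 by (simp add: B_def)
      have gb: "norm (s (n + j) - s n) \<le> B * (1 / 2 ^ n - 1 / 2 ^ (n + j))" for n j
      proof (induction j)
        case 0 then show ?case by simp
      next
        case (Suc j)
        have "norm (s (n + Suc j) - s n) \<le> norm (s (n + j) - s n) + norm (s (Suc (n + j)) - s (n + j))"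
          using norm_triangle_ineq[of "s (n + j) - s n" "s (Suc (n + j)) - s (n + j)"] by simp
        also have "\<dots> \<le> B * (1 / 2 ^ n - 1 / 2 ^ (n + j)) + M0 * norm v / 2 ^ (n + j)"
          using Suc step[of "n + j"] by linarith
        also have "\<dots> = B * (1 / 2 ^ n - 1 / 2 ^ (n + Suc j))"
          using geo_aux[of "2 ^ (n + j)" "n + j" "M0 * norm v" "1 / 2 ^ n"] unfolding B_def
          by (simp add: mult.assoc)
        finally show ?case .
      qed
      have gb2: "dist (s m) (s n) \<le> B / 2 ^ n" if nm: "n \<le> m" for m n
      proof -
        obtain j where j: "m = n + j" using le_Suc_ex[OF nm] by blast
        have "dist (s m) (s n) = norm (s (n + j) - s n)" by (simp add: dist_norm j)
        also have "\<dots> \<le> B * (1 / 2 ^ n - 1 / 2 ^ (n + j))" by (rule gb)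
        also have "\<dots> \<le> B * (1 / 2 ^ n)" using B0 by (intro mult_left_mono) simp_all
        finally show ?thesis by simp
      qed
      have "Cauchy s"
      proof (rule metric_CauchyI)
        fix e :: real assume e: "e > 0"
        have "(\<lambda>n. B / 2 ^ n) \<longlonglongrightarrow> 0" by (rule LIMSEQ_divide_realpow_zero) simp
        then have "eventually (\<lambda>n. B / 2 ^ n < e / 2) sequentially" using e by (intro order_tendstoD(2)) auto
        then obtain N where N: "B / 2 ^ N < e / 2" by (auto simp: eventually_sequentially)
        show "\<exists>M. \<forall>m\<ge>M. \<forall>n\<ge>M. dist (s m) (s n) < e"
        proof (intro exI allI impI)
          fix m n assume "N \<le> m" "N \<le> n"
          then have "dist (s m) (s N) \<le> B / 2 ^ N" "dist (s n) (s N) \<le> B / 2 ^ N" using gb2 by auto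
          then show "dist (s m) (s n) < e" using dist_triangle2[of "s m" "s n" "s N"] N by linarith
        qed
      qed
      then obtain x where x: "s \<longlonglongrightarrow> x" using Cauchy_convergent convergent_def by blast
      have "(\<lambda>k. v - A (s k)) \<longlonglongrightarrow> 0"
      proof (rule Lim_null_comparison)
        show "\<forall>\<^sub>F k in sequentially. norm (v - A (s k)) \<le> norm v / 2 ^ k" using I by simp
        show "(\<lambda>k. norm v / 2 ^ k) \<longlonglongrightarrow> 0" by (rule LIMSEQ_divide_realpow_zero) simp
      qed
      then have "(\<lambda>k. v - (v - A (s k))) \<longlonglongrightarrow> v - 0" by (intro tendsto_intros)
      then have As: "(\<lambda>k. A (s k)) \<longlonglongrightarrow> v" by simp
      have xD: "x \<in> D \<and> A x = v" using graph_limit[OF cl _ x As] I by blast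
      have "norm x \<le> B"
      proof (rule Lim_norm_ubound[OF _ x])
        show "\<forall>\<^sub>F k in sequentially. norm (s k) \<le> B"
          using gb2[of 0] s0 by (simp add: dist_norm)
      qed simp
      also have "B \<le> (2 * M0 + 1) * norm v" by (simp add: B_def algebra_simps)
      finally show ?thesis using xD by blast
    qed
  qed
qed

lemma riesz_sub:
  fixes R :: "'b::{real_inner,complete_space} set" and l :: "'b \<Rightarrow> real"
  assumes sub: "subspace R" and cl: "closed R"
    and add: "\<And>u v. u \<in> R \<Longrightarrow> v \<in> R \<Longrightarrow> l (u + v) = l u + l v"
    and sc: "\<And>c u. u \<in> R \<Longrightarrow> l (c *\<^sub>R u) = c * l u"
    and bd: "\<And>u. u \<in> R \<Longrightarrow> \<bar>l u\<bar> \<le> C * norm u"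
  shows "\<exists>w\<in>R. \<forall>u\<in>R. l u = inner u w"
proof (cases "\<forall>u\<in>R. l u = 0")
  case True then show ?thesis using subspace_0[OF sub] by (intro bexI[of _ 0]) auto
next
  case False
  then obtain v where v: "v \<in> R" "l v \<noteq> 0" by blast
  have l0: "l 0 = 0" using sc[of 0 0] subspace_0[OF sub] by simp
  have ldiff: "l (u - u') = l u - l u'" if "u \<in> R" "u' \<in> R" for u u'
  proof -
    have "(-1) *\<^sub>R u' \<in> R" using sub that(2) by (simp add: subspace_neg)
    then have "l (u + (-1) *\<^sub>R u') = l u + l ((-1) *\<^sub>R u')" using add that(1) by blast
    also have "l ((-1) *\<^sub>R u') = - l u'" using sc[OF that(2), of "-1"] by simp
    finally show ?thesis by simp
  qed
  define Z where "Z = {u \<in> R. l u = 0}"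
  have subZ: "subspace Z"
    unfolding subspace_def Z_def
    using subspace_0[OF sub] l0 sub add sc by (auto simp: subspace_add subspace_scale)
  have clZ: "closed Z"
    unfolding closed_sequential_limits
  proof (intro allI impI)
    fix X z assume h: "(\<forall>n. X n \<in> Z) \<and> X \<longlonglongrightarrow> z"
    have XR: "\<And>n. X n \<in> R" "\<And>n. l (X n) = 0" using h by (auto simp: Z_def)
    have zR: "z \<in> R" using cl h XR(1) unfolding closed_sequential_limits by blast
    have b: "\<bar>l z\<bar> \<le> C * norm (z - X n)" for n
      using bd[of "z - X n"] ldiff[OF zR XR(1)[of n]] XR(2)[of n] sub zR XR(1)[of n]
      by (simp add: subspace_diff)
    have "(\<lambda>n. C * norm (z - X n)) \<longlonglongrightarrow> C * norm (z - z)"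
      using h by (intro tendsto_intros) auto
    then have "(\<lambda>n. C * norm (z - X n)) \<longlonglongrightarrow> 0" by simp
    then have "\<bar>l z\<bar> \<le> 0" using b by (intro LIMSEQ_le_const) auto
    then show "z \<in> Z" using zR by (simp add: Z_def)
  qed
  define p where "p = orth_proj Z v"
  have pZ: "p \<in> Z" and porth: "\<forall>s\<in>Z. inner (v - p) s = 0"
    using orth_proj_props[OF subZ clZ, of v] by (simp_all add: p_def)
  define u0 where "u0 = v - p"
  have pR: "p \<in> R" "l p = 0" using pZ by (auto simp: Z_def)
  have u0R: "u0 \<in> R" using sub v(1) pR(1) by (simp add: u0_def subspace_diff)
  have lu0: "l u0 = l v" using ldiff[OF v(1) pR(1)] pR(2) by (simp add: u0_def)
  have u0ne: "u0 \<noteq> 0" using lu0 v(2) l0 by auto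
  have nu0: "(norm u0)\<^sup>2 > 0" using u0ne by simp
  define w where "w = (l u0 / (norm u0)\<^sup>2) *\<^sub>R u0"
  show ?thesis
  proof (intro bexI[of _ w] ballI)
    show "w \<in> R" using sub u0R by (simp add: w_def subspace_scale)
    fix u assume uR: "u \<in> R"
    define z where "z = u - (l u / l u0) *\<^sub>R u0"
    have sR: "(l u / l u0) *\<^sub>R u0 \<in> R" using sub u0R by (simp add: subspace_scale)
    have zR: "z \<in> R" using sub uR sR by (simp add: z_def subspace_diff)
    have "l z = l u - (l u / l u0) * l u0" using ldiff[OF uR sR] sc[OF u0R] by (simp add: z_def)
    then have "l z = 0" using lu0 v(2) by simp
    then have "z \<in> Z" using zR by (simp add: Z_def)
    then have "inner u0 z = 0" using porth by (simp add: u0_def)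
    then have "inner u0 u = (l u / l u0) * inner u0 u0"
      by (simp add: z_def inner_diff_right)
    then have "inner u u0 = (l u / l u0) * (norm u0)\<^sup>2"
      by (simp add: inner_commute power2_norm_eq_inner)
    then show "l u = inner u w"
      using nu0 lu0 v(2) by (simp add: w_def field_simps)
  qed
qed

lemma closed_range_adj:
  fixes D :: "'a::{real_inner,complete_space} set" and A :: "'a \<Rightarrow> 'b::{real_inner,complete_space}"
  assumes dd: "dd_closed_op D A" and R: "closed (ran D A)"
  shows "ran (adj_dom D A) (adj D A) = orth_compl (ker D A)"
proof -
  have lin: "lin_op D A" and dens: "densely_defined D" and cl: "closed_op D A"
    using dd by (auto simp: dd_closed_op_def)
  show ?thesis
  proof
    show "ran (adj_dom D A) (adj D A) \<subseteq> orth_compl (ker D A)"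
    proof
      fix y assume "y \<in> ran (adj_dom D A) (adj D A)"
      then obtain w where w: "w \<in> adj_dom D A" "y = adj D A w" by (auto simp: ran_def)
      show "y \<in> orth_compl (ker D A)" unfolding orth_compl_def
      proof (intro CollectI ballI)
        fix n assume "n \<in> ker D A"
        then have n: "n \<in> D" "A n = 0" by (auto simp: ker_def)
        have "inner (A n) w = inner n (adj D A w)" by (rule adj_prop[OF dens w(1) n(1)])
        then show "inner y n = 0" using n(2) w(2) by (simp add: inner_commute)
      qed
    qed
  next
    show "orth_compl (ker D A) \<subseteq> ran (adj_dom D A) (adj D A)"
    proof
      fix y assume y: "y \<in> orth_compl (ker D A)"
      have yk: "inner y n = 0" if "n \<in> ker D A" for n using y that by (simp add: orth_compl_def)
      define T where "T u = (SOME x. x \<in> D \<and> A x = u)" for u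
      define l where "l u = inner (T u) y" for u
      have key: "l u = inner x y" if "x \<in> D" "A x = u" for u x
      proof -
        have "\<exists>x. x \<in> D \<and> A x = u" using that by blast
        then have T: "T u \<in> D \<and> A (T u) = u" unfolding T_def by (rule someI_ex)
        have "T u - x \<in> D \<and> A (T u - x) = A (T u) - A x" using lin_op_diff[OF lin] T that(1) by blast
        then have "T u - x \<in> ker D A" using T that(2) by (simp add: ker_def)
        then have "inner y (T u - x) = 0" by (rule yk)
        then show ?thesis by (simp add: l_def inner_diff_right inner_commute)
      qed
      have preR: "\<exists>x. x \<in> D \<and> A x = u" if "u \<in> ran D A" for u using that by (auto simp: ran_def)
      obtain M where M: "M > 0" "\<forall>v\<in>ran D A. \<exists>x\<in>D. A x = v \<and> norm x \<le> M * norm v"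
        using open_mapping[OF lin cl R] by blast
      have "\<exists>w\<in>ran D A. \<forall>u\<in>ran D A. l u = inner u w"
      proof (rule riesz_sub[OF subspace_ran[OF lin] R])
        fix u v assume u: "u \<in> ran D A" and v: "v \<in> ran D A"
        obtain a where a: "a \<in> D" "A a = u" using preR[OF u] by blast
        obtain b where b: "b \<in> D" "A b = v" using preR[OF v] by blast
        have "a + b \<in> D \<and> A (a + b) = u + v" using lin_op_add[OF lin a(1) b(1)] a b by simp
        then have "l (u + v) = inner (a + b) y" using key by blast
        then show "l (u + v) = l u + l v" using key[OF a] key[OF b] by (simp add: inner_add_left)
      next
        fix c u assume u: "u \<in> ran D A"
        obtain a where a: "a \<in> D" "A a = u" using preR[OF u] by blast
        have "c *\<^sub>R a \<in> D \<and> A (c *\<^sub>R a) = c *\<^sub>R u" using lin_op_scale[OF lin a(1)] a by simp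
        then have "l (c *\<^sub>R u) = inner (c *\<^sub>R a) y" using key by blast
        then show "l (c *\<^sub>R u) = c * l u" using key[OF a] by simp
      next
        fix u assume u: "u \<in> ran D A"
        obtain x where x: "x \<in> D" "A x = u" "norm x \<le> M * norm u" using M(2) u by blast
        have "\<bar>l u\<bar> = \<bar>inner x y\<bar>" using key[OF x(1,2)] by simp
        also have "\<dots> \<le> norm x * norm y" by (rule Cauchy_Schwarz_ineq2)
        also have "\<dots> \<le> M * norm u * norm y" using x(3) by (simp add: mult_right_mono)
        finally show "\<bar>l u\<bar> \<le> (M * norm y) * norm u" by (simp add: algebra_simps)
      qed
      then obtain w where w: "\<forall>u\<in>ran D A. l u = inner u w" by blast
      have "\<forall>x\<in>D. inner (A x) w = inner x y"
      proof
        fix x assume x: "x \<in> D"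
        then have "A x \<in> ran D A" by (simp add: ran_def)
        then show "inner (A x) w = inner x y" using w key[OF x refl] by simp
      qed
      then have "w \<in> adj_dom D A \<and> adj D A w = y" by (rule adj_char[OF dens])
      then show "y \<in> ran (adj_dom D A) (adj D A)" by (auto simp: ran_def)
    qed
  qed
qed

lemma quad_le:
  fixes a e p :: "'a::real_inner"
  assumes "inner (e - p) a = 0" shows "2 * inner a e - inner a a \<le> (norm p)\<^sup>2"
proof -
  have "inner a (e - p) = 0" using assms by (simp add: inner_commute)
  then have ia: "inner a e = inner a p" by (simp add: inner_diff_right)
  have "0 \<le> (norm (p - a))\<^sup>2" by simp
  also have "\<dots> = (norm p)\<^sup>2 - 2 * inner a p + inner a a"
    unfolding power2_norm_eq_inner by (simp add: inner_diff_left inner_diff_right inner_commute)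
  finally show ?thesis using ia by linarith
qed

lemma quad_eq: fixes p :: "'a::real_inner" shows "2 * inner p p - inner p p = (norm p)\<^sup>2"
  by (simp add: power2_norm_eq_inner)

lemma expr_aux:
  fixes a x xt :: "'a::real_inner" and g \<phi> :: "'b::real_inner"
  assumes "inner g \<phi> = inner a x"
  shows "2 * inner g \<phi> - inner (2 *\<^sub>R xt + a) a = 2 * inner a (x - xt) - inner a a"
  using assms by (simp add: inner_add_left inner_add_right inner_diff_right inner_commute)

lemma pyth3:
  fixes a b c :: "'a::real_inner"
  assumes "inner a b = 0" "inner a c = 0" "inner b c = 0"
  shows "(norm (a + b + c))\<^sup>2 = (norm a)\<^sup>2 + (norm b)\<^sup>2 + (norm c)\<^sup>2"
  using assms unfolding power2_norm_eq_inner by (simp add: inner_add_left inner_add_right inner_commute)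

theorem theorem4p5:
  fixes D1 :: "'h1::{real_inner,complete_space} set" and A1 :: "'h1 \<Rightarrow> 'h2::{real_inner,complete_space}"
    and D2 :: "'h2 set" and A2 :: "'h2 \<Rightarrow> 'h3::{real_inner,complete_space}"
    and f :: 'h3 and g :: 'h1 and k x xt :: 'h2
  defines "K2 \<equiv> ker D2 A2 \<inter> ker (adj_dom D1 A1) (adj D1 A1)"
  defines "e \<equiv> x - xt"
  defines "eA1 \<equiv> orth_proj (ran D1 A1) e"
  defines "eA2s \<equiv> orth_proj (ran (adj_dom D2 A2) (adj D2 A2)) e"
  defines "eK2 \<equiv> orth_proj K2 e"
  assumes A1: "dd_closed_op D1 A1" and A2: "dd_closed_op D2 A2"
    and cplx: "ran D1 A1 \<subseteq> ker D2 A2"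
    and clR1: "closed (ran D1 A1)" and clR2: "closed (ran D2 A2)"
    and finK2: "fin_dim K2"
    and f: "f \<in> ran D2 A2" and g: "g \<in> ran (adj_dom D1 A1) (adj D1 A1)" and k: "k \<in> K2"
    and x: "x \<in> D2 \<inter> adj_dom D1 A1" and xf: "A2 x = f" and xg: "adj D1 A1 x = g"
    and xk: "orth_proj K2 x = k"
  shows
    "(e = eA1 + eK2 + eA2s \<and> eA1 \<in> ran D1 A1 \<and> eK2 \<in> K2
       \<and> eA2s \<in> ran (adj_dom D2 A2) (adj D2 A2)
       \<and> (norm e)\<^sup>2 = (norm eA1)\<^sup>2 + (norm eK2)\<^sup>2 + (norm eA2s)\<^sup>2)
  \<and>
    ((\<forall>\<phi>\<in>D1. 2 * inner g \<phi> - inner (2 *\<^sub>R xt + A1 \<phi>) (A1 \<phi>) \<le> (norm eA1)\<^sup>2)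
     \<and> red_inv D1 A1 (ran (adj_dom D1 A1) (adj D1 A1)) eA1
          \<in> D1 \<inter> ran (adj_dom D1 A1) (adj D1 A1)
     \<and> A1 (red_inv D1 A1 (ran (adj_dom D1 A1) (adj D1 A1)) eA1) = eA1
     \<and> (let \<phi> = red_inv D1 A1 (ran (adj_dom D1 A1) (adj D1 A1)) eA1 in
          2 * inner g \<phi> - inner (2 *\<^sub>R xt + A1 \<phi>) (A1 \<phi>) = (norm eA1)\<^sup>2))
  \<and>
    ((\<forall>\<phi>\<in>adj_dom D2 A2. 2 * inner f \<phi> - inner (2 *\<^sub>R xt + adj D2 A2 \<phi>) (adj D2 A2 \<phi>) \<le> (norm eA2s)\<^sup>2)
     \<and> red_inv (adj_dom D2 A2) (adj D2 A2) (ran D2 A2) eA2s \<in> adj_dom D2 A2 \<inter> ran D2 A2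
     \<and> adj D2 A2 (red_inv (adj_dom D2 A2) (adj D2 A2) (ran D2 A2) eA2s) = eA2s
     \<and> (let \<phi> = red_inv (adj_dom D2 A2) (adj D2 A2) (ran D2 A2) eA2s in
          2 * inner f \<phi> - inner (2 *\<^sub>R xt + adj D2 A2 \<phi>) (adj D2 A2 \<phi>) = (norm eA2s)\<^sup>2))
  \<and>
    ((\<forall>\<theta>\<in>K2. inner (2 *\<^sub>R (k - xt) - \<theta>) \<theta> \<le> (norm eK2)\<^sup>2)
     \<and> inner (2 *\<^sub>R (k - xt) - eK2) eK2 = (norm eK2)\<^sup>2)
  \<and>
    (\<forall>xp. xp \<in> orth_compl K2 \<and> xt = k + xp \<longrightarrow>
       eK2 = 0
       \<and> (\<forall>\<phi>\<in>D1. 2 * inner g \<phi> - inner (2 *\<^sub>R xp + A1 \<phi>) (A1 \<phi>) \<le> (norm eA1)\<^sup>2)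
       \<and> (let \<phi> = red_inv D1 A1 (ran (adj_dom D1 A1) (adj D1 A1)) eA1 in
            2 * inner g \<phi> - inner (2 *\<^sub>R xp + A1 \<phi>) (A1 \<phi>) = (norm eA1)\<^sup>2)
       \<and> (\<forall>\<phi>\<in>adj_dom D2 A2. 2 * inner f \<phi> - inner (2 *\<^sub>R xp + adj D2 A2 \<phi>) (adj D2 A2 \<phi>) \<le> (norm eA2s)\<^sup>2)
       \<and> (let \<phi> = red_inv (adj_dom D2 A2) (adj D2 A2) (ran D2 A2) eA2s in
            2 * inner f \<phi> - inner (2 *\<^sub>R xp + adj D2 A2 \<phi>) (adj D2 A2 \<phi>) = (norm eA2s)\<^sup>2))"
  proof -
  have lin1: "lin_op D1 A1" and dens1: "densely_defined D1" and cl1: "closed_op D1 A1"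
    using A1 by (auto simp: dd_closed_op_def)
  have lin2: "lin_op D2 A2" and dens2: "densely_defined D2" and cl2: "closed_op D2 A2"
    using A2 by (auto simp: dd_closed_op_def)
  define R1 where "R1 = ran D1 A1"
  define R2s where "R2s = ran (adj_dom D2 A2) (adj D2 A2)"
  define R1s where "R1s = ran (adj_dom D1 A1) (adj D1 A1)"
  define N1 where "N1 = ker D1 A1"
  define N2 where "N2 = ker D2 A2"
  define N1s where "N1s = ker (adj_dom D1 A1) (adj D1 A1)"
  have K2eq: "K2 = N2 \<inter> N1s" by (simp add: K2_def N2_def N1s_def)
  have R2s_eq: "R2s = orth_compl N2" unfolding R2s_def N2_def by (rule closed_range_adj[OF A2 clR2])
  have R1s_eq: "R1s = orth_compl N1" unfolding R1s_def N1_def by (rule closed_range_adj[OF A1 clR1])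
  have subR1: "subspace R1" unfolding R1_def by (rule subspace_ran[OF lin1])
  have clR1': "closed R1" using clR1 by (simp add: R1_def)
  have subR2s: "subspace R2s" unfolding R2s_eq by (rule orth_compl_subspace)
  have clR2s: "closed R2s" unfolding R2s_eq by (rule orth_compl_closed)
  have subN2: "subspace N2" unfolding N2_def by (rule subspace_ker[OF lin2])
  have clN2: "closed N2" unfolding N2_def by (rule closed_ker[OF cl2])
  have subN1: "subspace N1" unfolding N1_def by (rule subspace_ker[OF lin1])
  have clN1: "closed N1" unfolding N1_def by (rule closed_ker[OF cl1])
  have subR2: "subspace (ran D2 A2)" by (rule subspace_ran[OF lin2])
  have R1N2: "R1 \<subseteq> N2" using cplx by (simp add: R1_def N2_def)
  have k1: "s \<in> D2 \<and> A2 s = 0 \<and> s \<in> adj_dom D1 A1 \<and> adj D1 A1 s = 0" if "s \<in> K2" for s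
    using that by (simp add: K2_def ker_def)
  have k2: "inner t s = 0" if sK: "s \<in> K2" and tR: "t \<in> R1" for s t
  proof -
    obtain \<phi> where \<phi>: "\<phi> \<in> D1" "t = A1 \<phi>" using tR by (auto simp: R1_def ran_def)
    have "inner (A1 \<phi>) s = inner \<phi> (adj D1 A1 s)" using adj_prop[OF dens1 _ \<phi>(1)] k1[OF sK] by blast
    then show ?thesis using k1[OF sK] \<phi>(2) by simp
  qed
  have k3: "inner t s = 0" if "s \<in> N2" "t \<in> R2s" for s t
    using that by (simp add: R2s_eq orth_compl_def)
  have k5: "y \<in> N1s" if "\<forall>t\<in>R1. inner t y = 0" for y
  proof -
    have "\<forall>\<phi>\<in>D1. inner (A1 \<phi>) y = inner \<phi> 0" using that by (simp add: R1_def ran_def)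
    then have "y \<in> adj_dom D1 A1 \<and> adj D1 A1 y = 0" by (rule adj_char[OF dens1])
    then show ?thesis by (simp add: N1s_def ker_def)
  qed
  define P1 where "P1 z = orth_proj R1 z" for z
  define P2 where "P2 z = orth_proj R2s z" for z
  have P1: "P1 z \<in> R1" "\<forall>s\<in>R1. inner (z - P1 z) s = 0" for z
    using orth_proj_props[OF subR1 clR1'] by (simp_all add: P1_def)
  have P2: "P2 z \<in> R2s" "\<forall>s\<in>R2s. inner (z - P2 z) s = 0" for z
    using orth_proj_props[OF subR2s clR2s] by (simp_all add: P2_def)
  have dec: "z - P1 z - P2 z \<in> K2 \<and> orth_proj K2 z = z - P1 z - P2 z
             \<and> (\<forall>s\<in>K2. inner (z - orth_proj K2 z) s = 0)" for z
  proof -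
    define e' where "e' = z - P1 z - P2 z"
    have o1: "inner e' t = 0" if "t \<in> R1" for t
    proof -
      have "inner (z - P1 z) t = 0" using P1(2) that by blast
      moreover have "inner (P2 z) t = 0" using k3[of t "P2 z"] R1N2 that P2(1) by blast
      ultimately show ?thesis by (simp add: e'_def inner_diff_left)
    qed
    have eN1s: "e' \<in> N1s" using o1 k5 by (simp add: inner_commute)
    have o2: "inner e' t = 0" if "t \<in> R2s" for t
    proof -
      have "inner (z - P2 z) t = 0" using P2(2) that by blast
      moreover have "inner (P1 z) t = 0" using k3[of "P1 z" t] R1N2 that P1(1) by (auto simp: inner_commute)
      ultimately show ?thesis by (simp add: e'_def inner_diff_left algebra_simps)
    qed
    define q where "q = orth_proj N2 e'"
    have qN2: "q \<in> N2" and qo: "\<forall>s\<in>N2. inner (e' - q) s = 0"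
      using orth_proj_props[OF subN2 clN2, of e'] by (simp_all add: q_def)
    have "e' - q \<in> R2s" using qo by (simp add: R2s_eq orth_compl_def)
    then have a1: "inner e' (e' - q) = 0" by (rule o2)
    have a2: "inner (e' - q) q = 0" using qo qN2 by blast
    have "inner (e' - q) (e' - q) = 0" using a1 a2 by (simp add: inner_diff_left inner_commute)
    then have "e' = q" by simp
    then have eN2: "e' \<in> N2" using qN2 by simp
    have eK2: "e' \<in> K2" using eN2 eN1s K2eq by simp
    have orth: "\<forall>s\<in>K2. inner (z - e') s = 0"
    proof
      fix s assume s: "s \<in> K2"
      have "inner (P1 z) s = 0" using k2[OF s P1(1)] .
      moreover have "inner (P2 z) s = 0" using k3[of s "P2 z"] s K2eq P2(1) by (auto simp: inner_commute)
      ultimately show "inner (z - e') s = 0" by (simp add: e'_def inner_add_left)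
    qed
    have "orth_proj K2 z = e'" by (rule orth_proj_unique[OF eK2 orth])
    then show ?thesis using eK2 orth by (simp add: e'_def)
  qed
  have eA1: "eA1 = P1 e" by (simp add: eA1_def P1_def R1_def)
  have eA2s: "eA2s = P2 e" by (simp add: eA2s_def P2_def R2s_def)
  have eK2: "eK2 = e - eA1 - eA2s" using dec[of e] by (simp add: eK2_def eA1 eA2s)
  have eK2in: "eK2 \<in> K2" using dec[of e] by (simp add: eK2 eA1 eA2s)
  have eK2N2: "eK2 \<in> N2" using eK2in K2eq by simp
  have eA1in: "eA1 \<in> R1" using P1(1) by (simp add: eA1)
  have eA2sin: "eA2s \<in> R2s" using P2(1) by (simp add: eA2s)
  have eA1o: "inner (e - eA1) t = 0" if "t \<in> R1" for t using P1(2) that by (simp add: eA1)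
  have eA2so: "inner (e - eA2s) t = 0" if "t \<in> R2s" for t using P2(2) that by (simp add: eA2s)
  have eK2o: "inner (e - eK2) s = 0" if "s \<in> K2" for s unfolding eK2_def using dec[of e] that by blast
  have xko: "inner (x - k) s = 0" if "s \<in> K2" for s
  proof -
    have "\<forall>s\<in>K2. inner (x - orth_proj K2 x) s = 0" using dec[of x] by blast
    then show ?thesis using that unfolding xk by blast
  qed
  have x1: "x \<in> D2" "x \<in> adj_dom D1 A1" using x by auto
  have i: "e = eA1 + eK2 + eA2s \<and> eA1 \<in> ran D1 A1 \<and> eK2 \<in> K2
       \<and> eA2s \<in> ran (adj_dom D2 A2) (adj D2 A2)
       \<and> (norm e)\<^sup>2 = (norm eA1)\<^sup>2 + (norm eK2)\<^sup>2 + (norm eA2s)\<^sup>2"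
  proof -
    have dsum: "e = eA1 + eK2 + eA2s" by (simp add: eK2)
    have "inner eA1 eK2 = 0" using k2[OF eK2in eA1in] .
    moreover have "inner eA1 eA2s = 0" using k3[OF _ eA2sin, of eA1] R1N2 eA1in by (auto simp: inner_commute)
    moreover have "inner eK2 eA2s = 0" using k3[OF eK2N2 eA2sin] by (simp add: inner_commute)
    ultimately have "(norm (eA1 + eK2 + eA2s))\<^sup>2 = (norm eA1)\<^sup>2 + (norm eK2)\<^sup>2 + (norm eA2s)\<^sup>2"
      by (rule pyth3)
    then show ?thesis using dsum eA1in eK2in eA2sin by (simp add: R1_def R2s_def)
  qed
  have g1: "inner g \<phi> = inner (A1 \<phi>) x" if "\<phi> \<in> D1" for \<phi>
    using adj_prop[OF dens1 x1(2) that] xg by (simp add: inner_commute)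
  have ii_le: "2 * inner g \<phi> - inner (2 *\<^sub>R xt + A1 \<phi>) (A1 \<phi>) \<le> (norm eA1)\<^sup>2" if "\<phi> \<in> D1" for \<phi>
  proof -
    have "A1 \<phi> \<in> R1" using that by (simp add: R1_def ran_def)
    then have "inner (e - eA1) (A1 \<phi>) = 0" by (rule eA1o)
    then have "2 * inner (A1 \<phi>) e - inner (A1 \<phi>) (A1 \<phi>) \<le> (norm eA1)\<^sup>2" by (rule quad_le)
    then show ?thesis using expr_aux[OF g1[OF that], of xt] by (simp add: e_def)
  qed
  have ii_eq: "2 * inner g \<phi> - inner (2 *\<^sub>R xt + A1 \<phi>) (A1 \<phi>) = (norm eA1)\<^sup>2"
    if "\<phi> \<in> D1" "A1 \<phi> = eA1" for \<phi>
  proof -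
    have "inner (e - eA1) eA1 = 0" using eA1o eA1in by blast
    then have "inner e eA1 = inner eA1 eA1" unfolding inner_diff_left by simp
    then have "inner eA1 e = inner eA1 eA1" by (metis inner_commute)
    then show ?thesis using expr_aux[OF g1[OF that(1)], of xt] that(2) quad_eq[of eA1] by (simp add: e_def)
  qed
  have ri1: "red_inv D1 A1 R1s eA1 \<in> D1 \<inter> R1s \<and> A1 (red_inv D1 A1 R1s eA1) = eA1"
  proof -
    obtain v where v: "v \<in> D1" "eA1 = A1 v" using eA1in by (auto simp: R1_def ran_def)
    define u where "u = v - orth_proj N1 v"
    have qN1: "orth_proj N1 v \<in> N1" "\<forall>s\<in>N1. inner (v - orth_proj N1 v) s = 0"
      using orth_proj_props[OF subN1 clN1] by auto
    have q2: "orth_proj N1 v \<in> D1" "A1 (orth_proj N1 v) = 0" using qN1(1) by (auto simp: N1_def ker_def)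
    have u1: "u \<in> D1 \<and> A1 u = eA1" using lin_op_diff[OF lin1 v(1) q2(1)] q2(2) v(2) by (simp add: u_def)
    have u2: "u \<in> R1s" using qN1(2) by (simp add: R1s_eq orth_compl_def u_def)
    have uniq: "u' = u" if "u' \<in> D1 \<inter> R1s \<and> A1 u' = eA1" for u'
    proof -
      have "u' - u \<in> D1 \<and> A1 (u' - u) = A1 u' - A1 u" using lin_op_diff[OF lin1] that u1 by blast
      then have "u' - u \<in> N1" using that u1 by (simp add: N1_def ker_def)
      moreover have "u' - u \<in> R1s" using that u2 subspace_diff[OF orth_compl_subspace] by (auto simp: R1s_eq)
      ultimately have "inner (u' - u) (u' - u) = 0" by (simp add: R1s_eq orth_compl_def)
      then show ?thesis by simp
    qed
    have "red_inv D1 A1 R1s eA1 = u" unfolding red_inv_def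
      by (rule the_equality) (use u1 u2 uniq in auto)
    then show ?thesis using u1 u2 by simp
  qed
  have ii: "(\<forall>\<phi>\<in>D1. 2 * inner g \<phi> - inner (2 *\<^sub>R xt + A1 \<phi>) (A1 \<phi>) \<le> (norm eA1)\<^sup>2)
     \<and> red_inv D1 A1 (ran (adj_dom D1 A1) (adj D1 A1)) eA1
          \<in> D1 \<inter> ran (adj_dom D1 A1) (adj D1 A1)
     \<and> A1 (red_inv D1 A1 (ran (adj_dom D1 A1) (adj D1 A1)) eA1) = eA1
     \<and> (let \<phi> = red_inv D1 A1 (ran (adj_dom D1 A1) (adj D1 A1)) eA1 in
          2 * inner g \<phi> - inner (2 *\<^sub>R xt + A1 \<phi>) (A1 \<phi>) = (norm eA1)\<^sup>2)"
    using ii_le ri1 ii_eq[of "red_inv D1 A1 R1s eA1"] unfolding Let_def R1s_def[symmetric] by blast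
  have f1: "inner f \<phi> = inner (adj D2 A2 \<phi>) x" if "\<phi> \<in> adj_dom D2 A2" for \<phi>
    using adj_prop[OF dens2 that x1(1)] xf by (simp add: inner_commute)
  have adjR: "adj D2 A2 \<phi> \<in> R2s" if "\<phi> \<in> adj_dom D2 A2" for \<phi>
    using that by (simp add: R2s_def ran_def)
  have iii_le: "2 * inner f \<phi> - inner (2 *\<^sub>R xt + adj D2 A2 \<phi>) (adj D2 A2 \<phi>) \<le> (norm eA2s)\<^sup>2"
    if "\<phi> \<in> adj_dom D2 A2" for \<phi>
  proof -
    have "inner (e - eA2s) (adj D2 A2 \<phi>) = 0" using eA2so adjR[OF that] by blast
    then have "2 * inner (adj D2 A2 \<phi>) e - inner (adj D2 A2 \<phi>) (adj D2 A2 \<phi>) \<le> (norm eA2s)\<^sup>2"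
      by (rule quad_le)
    then show ?thesis using expr_aux[OF f1[OF that], of xt] by (simp add: e_def)
  qed
  have iii_eq: "2 * inner f \<phi> - inner (2 *\<^sub>R xt + adj D2 A2 \<phi>) (adj D2 A2 \<phi>) = (norm eA2s)\<^sup>2"
    if "\<phi> \<in> adj_dom D2 A2" "adj D2 A2 \<phi> = eA2s" for \<phi>
  proof -
    have "inner (e - eA2s) eA2s = 0" using eA2so eA2sin by blast
    then have "inner e eA2s = inner eA2s eA2s" unfolding inner_diff_left by simp
    then have "inner eA2s e = inner eA2s eA2s" by (metis inner_commute)
    then show ?thesis using expr_aux[OF f1[OF that(1)], of xt] that(2) quad_eq[of eA2s] by (simp add: e_def)
  qed
  have ri2: "red_inv (adj_dom D2 A2) (adj D2 A2) (ran D2 A2) eA2s \<in> adj_dom D2 A2 \<inter> ran D2 A2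
      \<and> adj D2 A2 (red_inv (adj_dom D2 A2) (adj D2 A2) (ran D2 A2) eA2s) = eA2s"
  proof -
    obtain w where w: "w \<in> adj_dom D2 A2" "eA2s = adj D2 A2 w" using eA2sin by (auto simp: R2s_def ran_def)
    define u where "u = orth_proj (ran D2 A2) w"
    have uR: "u \<in> ran D2 A2" and uo: "\<forall>s\<in>ran D2 A2. inner (w - u) s = 0"
      using orth_proj_props[OF subR2 clR2] by (auto simp: u_def)
    have "\<forall>y\<in>D2. inner (A2 y) u = inner y (adj D2 A2 w)"
    proof
      fix y assume y: "y \<in> D2"
      have "inner (w - u) (A2 y) = 0" using uo y by (simp add: ran_def)
      then have "inner w (A2 y) = inner u (A2 y)" unfolding inner_diff_left by simp
      then have "inner (A2 y) u = inner (A2 y) w" by (metis inner_commute)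
      also have "\<dots> = inner y (adj D2 A2 w)" by (rule adj_prop[OF dens2 w(1) y])
      finally show "inner (A2 y) u = inner y (adj D2 A2 w)" .
    qed
    then have u1: "u \<in> adj_dom D2 A2 \<and> adj D2 A2 u = eA2s" using adj_char[OF dens2] w(2) by blast
    have uniq: "u' = u" if "u' \<in> adj_dom D2 A2 \<inter> ran D2 A2 \<and> adj D2 A2 u' = eA2s" for u'
    proof -
      have o: "inner (A2 y) (u' - u) = 0" if "y \<in> D2" for y
        using adj_prop[OF dens2 _ that, of u'] adj_prop[OF dens2 _ that, of u] \<open>u' \<in> adj_dom D2 A2 \<inter> ran D2 A2 \<and> adj D2 A2 u' = eA2s\<close> u1
        by (simp add: inner_diff_right)
      have "u' - u \<in> ran D2 A2" using that uR subspace_diff[OF subR2] by blast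
      then obtain y where "y \<in> D2" "u' - u = A2 y" by (auto simp: ran_def)
      then have "inner (u' - u) (u' - u) = 0" using o by simp
      then show ?thesis by simp
    qed
    have "red_inv (adj_dom D2 A2) (adj D2 A2) (ran D2 A2) eA2s = u" unfolding red_inv_def
      by (rule the_equality) (use u1 uR uniq in auto)
    then show ?thesis using u1 uR by simp
  qed
  have iii: "(\<forall>\<phi>\<in>adj_dom D2 A2. 2 * inner f \<phi> - inner (2 *\<^sub>R xt + adj D2 A2 \<phi>) (adj D2 A2 \<phi>) \<le> (norm eA2s)\<^sup>2)
     \<and> red_inv (adj_dom D2 A2) (adj D2 A2) (ran D2 A2) eA2s \<in> adj_dom D2 A2 \<inter> ran D2 A2
     \<and> adj D2 A2 (red_inv (adj_dom D2 A2) (adj D2 A2) (ran D2 A2) eA2s) = eA2s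
     \<and> (let \<phi> = red_inv (adj_dom D2 A2) (adj D2 A2) (ran D2 A2) eA2s in
          2 * inner f \<phi> - inner (2 *\<^sub>R xt + adj D2 A2 \<phi>) (adj D2 A2 \<phi>) = (norm eA2s)\<^sup>2)"
    using iii_le ri2 iii_eq[of "red_inv (adj_dom D2 A2) (adj D2 A2) (ran D2 A2) eA2s"] unfolding Let_def by blast
  have kt: "inner (k - xt) \<theta> = inner eK2 \<theta>" if "\<theta> \<in> K2" for \<theta>
  proof -
    have eq: "k - xt = e - (x - k)" by (simp add: e_def)
    have "inner (k - xt) \<theta> = inner e \<theta> - inner (x - k) \<theta>" unfolding eq by (rule inner_diff_left)
    also have "\<dots> = inner e \<theta>" using xko[OF that] by simp
    also have "\<dots> = inner eK2 \<theta>" using eK2o[OF that] by (simp add: inner_diff_left)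
    finally show ?thesis .
  qed
  have iv: "(\<forall>\<theta>\<in>K2. inner (2 *\<^sub>R (k - xt) - \<theta>) \<theta> \<le> (norm eK2)\<^sup>2)
     \<and> inner (2 *\<^sub>R (k - xt) - eK2) eK2 = (norm eK2)\<^sup>2"
  proof
    show "\<forall>\<theta>\<in>K2. inner (2 *\<^sub>R (k - xt) - \<theta>) \<theta> \<le> (norm eK2)\<^sup>2"
    proof
      fix \<theta> assume th: "\<theta> \<in> K2"
      have q: "2 * inner \<theta> eK2 - inner \<theta> \<theta> \<le> (norm eK2)\<^sup>2" by (rule quad_le) simp
      have e1: "inner (2 *\<^sub>R (k - xt) - \<theta>) \<theta> = 2 * inner (k - xt) \<theta> - inner \<theta> \<theta>"
        by (simp add: inner_diff_left)
      have e2: "inner eK2 \<theta> = inner \<theta> eK2" by (rule inner_commute)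
      show "inner (2 *\<^sub>R (k - xt) - \<theta>) \<theta> \<le> (norm eK2)\<^sup>2"
        using q e1 e2 kt[OF th] by linarith
    qed
    show "inner (2 *\<^sub>R (k - xt) - eK2) eK2 = (norm eK2)\<^sup>2"
    proof -
      have e1: "inner (2 *\<^sub>R (k - xt) - eK2) eK2 = 2 * inner (k - xt) eK2 - inner eK2 eK2"
        by (simp add: inner_diff_left)
      then show ?thesis using kt[OF eK2in] quad_eq[of eK2] by linarith
    qed
  qed
  have v: "\<forall>xp. xp \<in> orth_compl K2 \<and> xt = k + xp \<longrightarrow>
       eK2 = 0
       \<and> (\<forall>\<phi>\<in>D1. 2 * inner g \<phi> - inner (2 *\<^sub>R xp + A1 \<phi>) (A1 \<phi>) \<le> (norm eA1)\<^sup>2)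
       \<and> (let \<phi> = red_inv D1 A1 (ran (adj_dom D1 A1) (adj D1 A1)) eA1 in
            2 * inner g \<phi> - inner (2 *\<^sub>R xp + A1 \<phi>) (A1 \<phi>) = (norm eA1)\<^sup>2)
       \<and> (\<forall>\<phi>\<in>adj_dom D2 A2. 2 * inner f \<phi> - inner (2 *\<^sub>R xp + adj D2 A2 \<phi>) (adj D2 A2 \<phi>) \<le> (norm eA2s)\<^sup>2)
       \<and> (let \<phi> = red_inv (adj_dom D2 A2) (adj D2 A2) (ran D2 A2) eA2s in
            2 * inner f \<phi> - inner (2 *\<^sub>R xp + adj D2 A2 \<phi>) (adj D2 A2 \<phi>) = (norm eA2s)\<^sup>2)"
  proof (intro allI impI)
    fix xp assume h: "xp \<in> orth_compl K2 \<and> xt = k + xp"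
    have xpo: "inner xp s = 0" if "s \<in> K2" for s using h that by (simp add: orth_compl_def)
    have zK: "0 \<in> K2"
    proof -
      have "\<forall>\<phi>\<in>D1. inner (A1 \<phi>) 0 = inner \<phi> 0" by simp
      then have "0 \<in> adj_dom D1 A1 \<and> adj D1 A1 0 = 0" by (rule adj_char[OF dens1])
      then show ?thesis using lin_op_zero[OF lin2] by (simp add: K2_def ker_def)
    qed
    have "orth_proj K2 e = 0"
    proof (rule orth_proj_unique[OF zK], intro ballI)
      fix s assume s: "s \<in> K2"
      have "e = (x - k) - xp" using h by (simp add: e_def)
      then show "inner (e - 0) s = 0" using xko[OF s] xpo[OF s] by (simp add: inner_diff_left)
    qed
    then have ek0: "eK2 = 0" by (simp add: eK2_def)
    have kA1: "inner (A1 \<phi>) k = 0" if "\<phi> \<in> D1" for \<phi>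
      using k2[OF k, of "A1 \<phi>"] that by (simp add: R1_def ran_def)
    have kA2: "inner (adj D2 A2 \<phi>) k = 0" if "\<phi> \<in> adj_dom D2 A2" for \<phi>
      using adj_prop[OF dens2 that, of k] k1[OF k] by (simp add: inner_commute)
    have sw: "2 * inner a (x - xp) - inner a a = 2 * inner a (x - xt) - inner a a" if "inner a k = 0" for a
    proof -
      have eq: "x - xp = (x - xt) + k" using h by simp
      have "inner a (x - xp) = inner a (x - xt) + inner a k" unfolding eq by (rule inner_add_right)
      then show ?thesis using that by simp
    qed
    have v2: "2 * inner g \<phi> - inner (2 *\<^sub>R xp + A1 \<phi>) (A1 \<phi>) = 2 * inner g \<phi> - inner (2 *\<^sub>R xt + A1 \<phi>) (A1 \<phi>)"
      if "\<phi> \<in> D1" for \<phi>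
      using expr_aux[OF g1[OF that], of xp] expr_aux[OF g1[OF that], of xt] sw[OF kA1[OF that]] by simp
    have v3: "2 * inner f \<phi> - inner (2 *\<^sub>R xp + adj D2 A2 \<phi>) (adj D2 A2 \<phi>)
            = 2 * inner f \<phi> - inner (2 *\<^sub>R xt + adj D2 A2 \<phi>) (adj D2 A2 \<phi>)"
      if "\<phi> \<in> adj_dom D2 A2" for \<phi>
      using expr_aux[OF f1[OF that], of xp] expr_aux[OF f1[OF that], of xt] sw[OF kA2[OF that]] by simp
    have r1: "red_inv D1 A1 (ran (adj_dom D1 A1) (adj D1 A1)) eA1 \<in> D1" using ri1 by (simp add: R1s_def)
    have r2: "red_inv (adj_dom D2 A2) (adj D2 A2) (ran D2 A2) eA2s \<in> adj_dom D2 A2" using ri2 by simp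
    have A1r: "A1 (red_inv D1 A1 (ran (adj_dom D1 A1) (adj D1 A1)) eA1) = eA1" using ri1 by (simp add: R1s_def)
    have A2r: "adj D2 A2 (red_inv (adj_dom D2 A2) (adj D2 A2) (ran D2 A2) eA2s) = eA2s" using ri2 by simp
    show "eK2 = 0
       \<and> (\<forall>\<phi>\<in>D1. 2 * inner g \<phi> - inner (2 *\<^sub>R xp + A1 \<phi>) (A1 \<phi>) \<le> (norm eA1)\<^sup>2)
       \<and> (let \<phi> = red_inv D1 A1 (ran (adj_dom D1 A1) (adj D1 A1)) eA1 in
            2 * inner g \<phi> - inner (2 *\<^sub>R xp + A1 \<phi>) (A1 \<phi>) = (norm eA1)\<^sup>2)
       \<and> (\<forall>\<phi>\<in>adj_dom D2 A2. 2 * inner f \<phi> - inner (2 *\<^sub>R xp + adj D2 A2 \<phi>) (adj D2 A2 \<phi>) \<le> (norm eA2s)\<^sup>2)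
       \<and> (let \<phi> = red_inv (adj_dom D2 A2) (adj D2 A2) (ran D2 A2) eA2s in
            2 * inner f \<phi> - inner (2 *\<^sub>R xp + adj D2 A2 \<phi>) (adj D2 A2 \<phi>) = (norm eA2s)\<^sup>2)"
    proof (intro conjI ballI)
      show "eK2 = 0" by (rule ek0)
      fix \<phi> assume "\<phi> \<in> D1"
      then show "2 * inner g \<phi> - inner (2 *\<^sub>R xp + A1 \<phi>) (A1 \<phi>) \<le> (norm eA1)\<^sup>2"
        using v2 ii_le by simp
    next
      show "let \<phi> = red_inv D1 A1 (ran (adj_dom D1 A1) (adj D1 A1)) eA1 in
            2 * inner g \<phi> - inner (2 *\<^sub>R xp + A1 \<phi>) (A1 \<phi>) = (norm eA1)\<^sup>2"
        using v2[OF r1] ii_eq[OF r1 A1r] unfolding Let_def by linarith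
    next
      fix \<phi> assume "\<phi> \<in> adj_dom D2 A2"
      then show "2 * inner f \<phi> - inner (2 *\<^sub>R xp + adj D2 A2 \<phi>) (adj D2 A2 \<phi>) \<le> (norm eA2s)\<^sup>2"
        using v3 iii_le by simp
    next
      show "let \<phi> = red_inv (adj_dom D2 A2) (adj D2 A2) (ran D2 A2) eA2s in
            2 * inner f \<phi> - inner (2 *\<^sub>R xp + adj D2 A2 \<phi>) (adj D2 A2 \<phi>) = (norm eA2s)\<^sup>2"
        using v3[OF r2] iii_eq[OF r2 A2r] unfolding Let_def by linarith
    qed
  qed
  show ?thesis by (rule conjI[OF i conjI[OF ii conjI[OF iii conjI[OF iv v]]]])
qed

end
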